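(* Let $m\le n$, let $\overline A=(\overline a_{ij})\in\mathbb{R}^{m\times n}$ be arbitrary and $\sigma>0$, and let $A\in\mathbb{R}^{m\times n}$ have independent entries $A_{ij}\sim\mathcal N(\overline a_{ij},\sigma^2)$. Then $$\kappa_F(A)\le 98\sigma^2n^3+2n\|\overline A\|^2+\frac{e^2n^4}{\sigma^2}$$ with probability at least $1-\big(\frac{1}{\sqrt n}+e^{-2n/\pi^2}\big)$.
   Context: $\kappa_F(A)=\|A\|_F^2+\|A^\dagger\|_F^2$, where $A^\dagger$ is the Moore–Penrose pseudoinverse; $\|\overline A\|$ is the spectral (operator) norm. *)

theory Defs
  imports "HOL-Probability.Probability"
begin

definition frob_norm :: "real^'n^'m \<Rightarrow> real" where
  "frob_norm A = sqrt (\<Sum>i\<in>UNIV. \<Sum>j\<in>UNIV. (A $ i $ j)\<^sup>2)"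

definition pinv :: "real^'n^'m \<Rightarrow> real^'m^'n" where
  "pinv A = (THE X. A ** X ** A = A \<and> X ** A ** X = X \<and>
                    transpose (A ** X) = A ** X \<and> transpose (X ** A) = X ** A)"

definition kappa_F :: "real^'n^'m \<Rightarrow> real" where
  "kappa_F A = (frob_norm A)\<^sup>2 + (frob_norm (pinv A))\<^sup>2"

definition spec_norm :: "real^'n^'m \<Rightarrow> real" where
  "spec_norm A = onorm (\<lambda>x. A *v x)"

definition gaussian_matrix :: "real^'n^'m \<Rightarrow> real \<Rightarrow> (real^'n^'m) measure" where
  "gaussian_matrix Abar \<sigma> =
     distr (PiM (UNIV :: ('m \<times> 'n) set)
              (\<lambda>ij. density lborel (normal_density (Abar $ fst ij $ snd ij) \<sigma>)))
           borel (\<lambda>f. \<chi> i j. f (i, j))"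

end

theory Submission
  imports Defs
begin


lemma frob_sq: "(frob_norm A)\<^sup>2 = (\<Sum>i\<in>UNIV. \<Sum>j\<in>UNIV. (A $ i $ j)\<^sup>2)"
  unfolding frob_norm_def by (simp add: sum_nonneg)

lemma frob_eq_norm: "frob_norm A = norm A"
  unfolding frob_norm_def norm_vec_def L2_set_def
  by (simp add: sum_nonneg)

lemma mat_inner_transpose: "((A::real^'n^'m) *v x) \<bullet> y = x \<bullet> (transpose A *v y)"
  by (metis dot_lmul_matrix inner_commute vector_transpose_matrix)

definition pen :: "real^'n^'m \<Rightarrow> real^'m^'n \<Rightarrow> bool" where
  "pen A X \<longleftrightarrow> A ** X ** A = A \<and> X ** A ** X = X \<and>
                    transpose (A ** X) = A ** X \<and> transpose (X ** A) = X ** A"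

lemma pen_unique:
  assumes "pen A X" "pen A Y" shows "X = Y"
proof -
  have a1: "A ** X ** A = A" "X ** A ** X = X" "transpose (A ** X) = A ** X" "transpose (X ** A) = X ** A"
    and b1: "A ** Y ** A = A" "Y ** A ** Y = Y" "transpose (A ** Y) = A ** Y" "transpose (Y ** A) = Y ** A"
    using assms unfolding pen_def by auto
  have "X = X ** (A ** X)" using a1 by (simp add: matrix_mul_assoc)
  also have "\<dots> = X ** transpose (A ** X)" using a1 by simp
  also have "\<dots> = X ** transpose X ** transpose A" by (simp add: matrix_transpose_mul matrix_mul_assoc)
  also have "\<dots> = X ** transpose X ** transpose (A ** Y ** A)" using b1 by simp
  also have "\<dots> = X ** transpose (A ** X) ** transpose (A ** Y)"
    by (simp add: matrix_transpose_mul matrix_mul_assoc)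
  also have "\<dots> = X ** (A ** X) ** (A ** Y)" using a1 b1 by simp
  also have "\<dots> = (X ** A ** X) ** A ** Y" by (simp add: matrix_mul_assoc)
  also have "\<dots> = X ** A ** Y" using a1 by simp
  finally have 1: "X = X ** A ** Y" .
  have "Y = (Y ** A) ** Y" using b1 by (simp add: matrix_mul_assoc)
  also have "\<dots> = transpose (Y ** A) ** Y" using b1 by simp
  also have "\<dots> = transpose A ** transpose Y ** Y" by (simp add: matrix_transpose_mul matrix_mul_assoc)
  also have "\<dots> = transpose (A ** X ** A) ** transpose Y ** Y" using a1 by simp
  also have "\<dots> = transpose (X ** A) ** transpose (Y ** A) ** Y"
    by (simp add: matrix_transpose_mul matrix_mul_assoc)
  also have "\<dots> = (X ** A) ** (Y ** A) ** Y" using a1 b1 by simp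
  also have "\<dots> = X ** A ** (Y ** A ** Y)" by (simp add: matrix_mul_assoc)
  also have "\<dots> = X ** A ** Y" using b1 by simp
  finally show ?thesis using 1 by simp
qed

lemma sym_from_inner:
  fixes M :: "real^'n^'n"
  assumes "\<And>x y. (M *v x) \<bullet> y = x \<bullet> (M *v y)"
  shows "transpose M = M"
proof -
  have vax: "(M *v axis j 1) $ i = M $ i $ j" for i j
    by (metis cart_eq_inner_axis matrix_vector_mul_component)
  have "M $ j $ i = M $ i $ j" for i j
    using assms[of "axis i 1" "axis j 1"]
    by (metis vax cart_eq_inner_axis inner_commute)
  then show ?thesis by (simp add: transpose_def vec_eq_iff)
qed

lemma mv_inner_self_zero: "(x::real^'n) \<bullet> x = 0 \<Longrightarrow> x = 0" by simp

lemma pen_exists: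
  fixes A :: "real^'n^'m"
  shows "\<exists>X. pen A X"
proof -
  define At where "At = transpose A"
  have AtT: "transpose At = A" unfolding At_def by simp
  define V where "V = range (\<lambda>w. At *v w)"
  have inner1: "(A *v x) \<bullet> y = x \<bullet> (At *v y)" for x y
    unfolding At_def by (rule mat_inner_transpose)
  have inner2: "(At *v x) \<bullet> y = x \<bullet> (A *v y)" for x y
    using mat_inner_transpose[of At x y] AtT by simp
  have kerperp: "v \<bullet> k = 0" if "v \<in> V" "A *v k = 0" for v k
    using that inner2 unfolding V_def by auto
  have Vdiff: "v1 - v2 \<in> V" if "v1 \<in> V" "v2 \<in> V" for v1 v2
    using that unfolding V_def by (auto simp: matrix_vector_mult_diff_distrib[symmetric])
  have Vadd: "v1 + v2 \<in> V" if "v1 \<in> V" "v2 \<in> V" for v1 v2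
    using that unfolding V_def by (auto simp: matrix_vector_right_distrib[symmetric])
  have Vscale: "c *\<^sub>R v1 \<in> V" if "v1 \<in> V" for v1 c
    using that unfolding V_def by (auto simp: matrix_vector_mult_scaleR[symmetric])
  have Vsub: "subspace V" unfolding V_def
    by (simp add: subspace_UNIV linear_subspace_image)
  have uniq: "v1 = v2" if "v1 \<in> V" "v2 \<in> V" "At *v (A *v v1) = At *v (A *v v2)" for v1 v2
  proof -
    define d where "d = v1 - v2"
    have dV: "d \<in> V" using Vdiff that d_def by auto
    have "At *v (A *v d) = 0" using that(3) unfolding d_def
      by (simp add: matrix_vector_mult_diff_distrib)
    then have "(A *v d) \<bullet> (A *v d) = 0" using inner1[of d "A *v d"] by simp
    then have "A *v d = 0" by simp
    then have "d \<bullet> d = 0" using kerperp[OF dV] by simp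
    then show ?thesis unfolding d_def by simp
  qed
  have ex: "\<exists>v\<in>V. At *v (A *v v) = At *v y" for y
  proof -
    obtain a b where a: "a \<in> span (range (\<lambda>x. A *v x))"
      and b: "\<And>w. w \<in> span (range (\<lambda>x. A *v x)) \<Longrightarrow> orthogonal b w" and yab: "y = a + b"
      using orthogonal_subspace_decomp_exists by blast
    have sp: "subspace (range (\<lambda>x. A *v x))"
      by (simp add: subspace_UNIV linear_subspace_image)
    have "a \<in> range (\<lambda>x. A *v x)" using a sp by (metis span_eq_iff)
    then obtain x where ax: "a = A *v x" by auto
    have "b \<bullet> (A *v (At *v b)) = 0" using b[of "A *v (At *v b)"]
      by (simp add: span_base orthogonal_def)
    then have "(At *v b) \<bullet> (At *v b) = 0" using inner2[of b "At *v b"] by (simp add: inner_commute)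
    then have Atb: "At *v b = 0" by simp
    obtain c d where c: "c \<in> span V" and d: "\<And>w. w \<in> span V \<Longrightarrow> orthogonal d w" and xcd: "x = c + d"
      using orthogonal_subspace_decomp_exists by blast
    have cV: "c \<in> V" using c Vsub by (metis span_eq_iff)
    have "d \<bullet> (At *v (A *v d)) = 0" using d[of "At *v (A *v d)"]
      by (simp add: span_base orthogonal_def V_def)
    then have "(A *v d) \<bullet> (A *v d) = 0" using inner1[of d "A *v d"] by simp
    then have Ad: "A *v d = 0" by simp
    have "At *v (A *v c) = At *v y"
      using Ad Atb by (simp add: yab ax xcd matrix_vector_right_distrib)
    then show ?thesis using cV by blast
  qed
  define g where "g y = (THE v. v \<in> V \<and> At *v (A *v v) = At *v y)" for y
  have g_spec: "g y \<in> V \<and> At *v (A *v g y) = At *v y" for y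
  proof -
    from ex[of y] obtain v where "v \<in> V" "At *v (A *v v) = At *v y" by blast
    then have "\<exists>!v. v \<in> V \<and> At *v (A *v v) = At *v y" using uniq by metis
    then show ?thesis unfolding g_def by (rule theI')
  qed
  have g_eq: "g y = v" if "v \<in> V" "At *v (A *v v) = At *v y" for y v
    using uniq[OF _ that(1)] g_spec[of y] that(2) by metis
  have lin: "linear g"
  proof (rule linearI)
    fix x y show "g (x + y) = g x + g y"
      by (rule g_eq) (use g_spec Vadd in \<open>auto simp: matrix_vector_right_distrib\<close>)
  next
    fix c x show "g (c *\<^sub>R x) = c *\<^sub>R g x"
      by (rule g_eq) (use g_spec Vscale in \<open>auto simp: matrix_vector_mult_scaleR\<close>)
  qed
  define X where "X = matrix g"
  have Xg: "X *v y = g y" for y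
    using matrix_vector_mul(2)[OF lin] unfolding X_def by metis
  have AgA: "A *v g (A *v x) = A *v x" for x
  proof -
    have "At *v (A *v (g (A *v x) - x)) = 0"
      using g_spec[of "A *v x"] by (simp add: matrix_vector_mult_diff_distrib)
    then have "(A *v (g (A *v x) - x)) \<bullet> (A *v (g (A *v x) - x)) = 0"
      using inner1[of "g (A *v x) - x" "A *v (g (A *v x) - x)"] by simp
    then show ?thesis by (simp add: matrix_vector_mult_diff_distrib)
  qed
  have gAg: "g (A *v g y) = g y" for y
    by (rule g_eq) (use g_spec in auto)
  have p1: "A ** X ** A = A"
    by (rule matrix_eq[THEN iffD2]) (simp add: matrix_vector_mul_assoc[symmetric] Xg AgA)
  have p2: "X ** A ** X = X"
    by (rule matrix_eq[THEN iffD2]) (simp add: matrix_vector_mul_assoc[symmetric] Xg gAg)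
  have p3: "transpose (A ** X) = A ** X"
  proof (rule sym_from_inner)
    have key: "(A *v g y) \<bullet> z = (A *v g y) \<bullet> (A *v g z)" for y z
    proof -
      have "(A *v g y) \<bullet> (z - A *v g z) = g y \<bullet> (At *v z - At *v (A *v g z))"
        using inner1 by (simp add: matrix_vector_mult_diff_distrib)
      also have "\<dots> = 0" using g_spec[of z] by simp
      finally show ?thesis by (simp add: inner_diff_right)
    qed
    fix y z
    show "((A ** X) *v y) \<bullet> z = y \<bullet> ((A ** X) *v z)"
      using key[of y z] key[of z y] by (simp add: matrix_vector_mul_assoc[symmetric] Xg inner_commute)
  qed
  have p4: "transpose (X ** A) = X ** A"
  proof (rule sym_from_inner)
    have key: "(g (A *v y)) \<bullet> z = g (A *v y) \<bullet> g (A *v z)" for y z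
    proof -
      have "A *v (z - g (A *v z)) = 0" using AgA[of z] by (simp add: matrix_vector_mult_diff_distrib)
      then have "(g (A *v y)) \<bullet> (z - g (A *v z)) = 0" using kerperp g_spec by blast
      then show ?thesis by (simp add: inner_diff_right)
    qed
    fix y z
    show "((X ** A) *v y) \<bullet> z = y \<bullet> ((X ** A) *v z)"
      using key[of y z] key[of z y] by (simp add: matrix_vector_mul_assoc[symmetric] Xg inner_commute)
  qed
  show ?thesis using p1 p2 p3 p4 unfolding pen_def by blast
qed

lemma pinv_pen: "pen A (pinv A)"
proof -
  obtain X where X: "pen A X" using pen_exists by blast
  have "pinv A = X" unfolding pinv_def
    by (rule the_equality) (use X pen_unique in \<open>auto simp: pen_def\<close>)
  then show ?thesis using X by simp
qed

lemma cont_mm[continuous_intros]: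
  fixes f :: "'a::topological_space \<Rightarrow> real^'n^'m" and g :: "'a \<Rightarrow> real^'k^'n"
  assumes "continuous_on S f" "continuous_on S g"
  shows "continuous_on S (\<lambda>x. f x ** g x)"
  unfolding matrix_matrix_mult_def
  by (intro continuous_intros assms)

lemma cont_tr[continuous_intros]:
  fixes f :: "'a::topological_space \<Rightarrow> real^'n^'m"
  assumes "continuous_on S f"
  shows "continuous_on S (\<lambda>x. transpose (f x))"
  unfolding transpose_def
  by (intro continuous_intros assms)

lemma kappa_pen: "kappa_F A = (norm A)\<^sup>2 + (norm (pinv A))\<^sup>2"
  unfolding kappa_F_def frob_eq_norm ..

lemma closed_kappa_le: "closed {A::real^'n^'m. kappa_F A \<le> c}"
proof -
  define T where "T = {p::(real^'m^'n) \<times> (real^'n^'m). pen (snd p) (fst p) \<and> (norm (snd p))\<^sup>2 + (norm (fst p))\<^sup>2 \<le> c}"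
  have cT: "closed T"
    unfolding T_def pen_def Collect_conj_eq
    by (intro closed_Int closed_Collect_eq closed_Collect_le continuous_intros)
  have eq: "{A::real^'n^'m. kappa_F A \<le> c} = {A. \<exists>X. X \<in> cball 0 (sqrt \<bar>c\<bar>) \<and> (X, A) \<in> T}"
  proof (intro set_eqI iffI)
    fix A assume "A \<in> {A::real^'n^'m. kappa_F A \<le> c}"
    then have k: "(norm A)\<^sup>2 + (norm (pinv A))\<^sup>2 \<le> c" by (simp add: kappa_pen)
    then have "(norm (pinv A))\<^sup>2 \<le> \<bar>c\<bar>" by (smt (verit) zero_le_power2)
    then have "norm (pinv A) \<le> sqrt \<bar>c\<bar>" using real_le_rsqrt by blast
    then show "A \<in> {A. \<exists>X. X \<in> cball 0 (sqrt \<bar>c\<bar>) \<and> (X, A) \<in> T}"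
      using k pinv_pen[of A] unfolding T_def by auto
  next
    fix A assume "A \<in> {A. \<exists>X. X \<in> cball 0 (sqrt \<bar>c\<bar>) \<and> (X, A) \<in> T}"
    then obtain X where "pen A X" "(norm A)\<^sup>2 + (norm X)\<^sup>2 \<le> c" unfolding T_def by auto
    moreover have "pinv A = X" using pen_unique[OF pinv_pen[of A] \<open>pen A X\<close>] .
    ultimately show "A \<in> {A::real^'n^'m. kappa_F A \<le> c}" by (simp add: kappa_pen)
  qed
  show ?thesis unfolding eq
    by (rule closed_compact_projection[OF compact_cball cT])
qed

lemma pinv_le_right_inverse:
  fixes A :: "real^'n^'m" and X :: "real^'m^'n"
  assumes AX: "A ** X = mat 1"
  shows "(frob_norm (pinv A))\<^sup>2 \<le> (frob_norm X)\<^sup>2"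
proof -
  define P where "P = pinv A"
  have p: "A ** P ** A = A" "P ** A ** P = P" "transpose (A ** P) = A ** P" "transpose (P ** A) = P ** A"
    using pinv_pen[of A] unfolding pen_def P_def by auto
  have AP: "A ** P = mat 1"
  proof -
    have "A ** P = A ** P ** (A ** X)" using AX by simp
    also have "\<dots> = (A ** P ** A) ** X" by (simp add: matrix_mul_assoc)
    finally show ?thesis using p AX by simp
  qed
  define D where "D = X - P"
  have "A ** X = A ** P + A ** D" using matrix_add_ldistrib[of A P D] unfolding D_def by simp
  then have AD: "A ** D = 0" using AX AP by simp
  have "transpose P = transpose (P ** A ** P)" using p by simp
  also have "\<dots> = transpose P ** (P ** A)" using p(4) matrix_transpose_mul[of "P ** A" P] by simp
  finally have "transpose P ** D = transpose P ** P ** (A ** D)" by (metis matrix_mul_assoc)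
  then have PD: "transpose P ** D = 0" using AD by simp
  have cross: "(\<Sum>i\<in>UNIV. \<Sum>j\<in>UNIV. P $ i $ j * D $ i $ j) = 0"
  proof -
    have "(\<Sum>i\<in>UNIV. \<Sum>j\<in>UNIV. P $ i $ j * D $ i $ j) = (\<Sum>j\<in>UNIV. (transpose P ** D) $ j $ j)"
      by (subst sum.swap) (simp add: matrix_matrix_mult_def transpose_def)
    then show ?thesis using PD by simp
  qed
  have "(frob_norm X)\<^sup>2 = (\<Sum>i\<in>UNIV. \<Sum>j\<in>UNIV. (P $ i $ j + D $ i $ j)\<^sup>2)"
    unfolding frob_sq D_def by simp
  also have "\<dots> = (\<Sum>i\<in>UNIV. \<Sum>j\<in>UNIV. (P $ i $ j)\<^sup>2) + (\<Sum>i\<in>UNIV. \<Sum>j\<in>UNIV. (D $ i $ j)\<^sup>2)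
      + 2 * (\<Sum>i\<in>UNIV. \<Sum>j\<in>UNIV. P $ i $ j * D $ i $ j)"
    by (simp add: power2_sum sum.distrib sum_distrib_left mult.assoc)
  also have "\<dots> \<ge> (frob_norm P)\<^sup>2" unfolding cross frob_sq
    by (simp add: sum_nonneg)
  finally show ?thesis unfolding P_def .
qed

lemma norm_sq_vec: "(norm (x::real^'n))\<^sup>2 = (\<Sum>i\<in>UNIV. (x $ i)\<^sup>2)"
  by (simp add: norm_vec_def L2_set_def sum_nonneg)

definition good :: "real \<Rightarrow> 'm \<Rightarrow> real^'n^'m \<Rightarrow> bool" where
  "good \<delta> i A \<longleftrightarrow> (\<exists>u. norm u = 1 \<and> (\<forall>k. k \<noteq> i \<longrightarrow> A $ k \<bullet> u = 0) \<and> \<delta> \<le> \<bar>A $ i \<bullet> u\<bar>)"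

lemma closed_good: "closed {A::real^'n^'m. good \<delta> i A}"
proof -
  define T where "T = {p::(real^'n) \<times> (real^'n^'m). (\<forall>k. k \<noteq> i \<longrightarrow> snd p $ k \<bullet> fst p = 0) \<and> \<delta> \<le> \<bar>snd p $ i \<bullet> fst p\<bar>}"
  have cT: "closed T"
    unfolding T_def
    by (intro closed_Collect_conj closed_Collect_all closed_Collect_imp open_Collect_const
          closed_Collect_eq closed_Collect_le continuous_intros)
  have eq: "{A::real^'n^'m. good \<delta> i A} = {A. \<exists>u. u \<in> sphere 0 1 \<and> (u, A) \<in> T}"
    unfolding good_def T_def by auto
  show ?thesis unfolding eq by (rule closed_compact_projection[OF compact_sphere cT])
qed

lemma right_inv_good:
  fixes A :: "real^'n^'m"
  assumes d: "\<delta> > 0" and g: "\<And>i. good \<delta> i A"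
  shows "(frob_norm (pinv A))\<^sup>2 \<le> real CARD('m) / \<delta>\<^sup>2"
proof -
  obtain u where u: "\<And>i. norm (u i) = 1" "\<And>i k. k \<noteq> i \<Longrightarrow> A $ k \<bullet> u i = 0" "\<And>i. \<delta> \<le> \<bar>A $ i \<bullet> u i\<bar>"
    using g unfolding good_def by metis
  define dd where "dd c = A $ c \<bullet> u c" for c
  have ddpos: "\<delta> \<le> \<bar>dd c\<bar>" for c using u(3) dd_def by simp
  define X :: "real^'m^'n" where "X = (\<chi> r c. u c $ r / dd c)"
  have AX: "A ** X = mat 1"
  proof -
    have "(A ** X) $ i $ c = (A $ i \<bullet> u c) / dd c" for i c
      by (simp add: X_def matrix_matrix_mult_def inner_vec_def sum_divide_distrib)
    moreover have "(A $ i \<bullet> u c) / dd c = (if i = c then 1 else 0)" for i c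
      using u(2)[of i c] ddpos[of c] d unfolding dd_def by auto
    ultimately show ?thesis by (simp add: vec_eq_iff mat_def)
  qed
  have "(frob_norm X)\<^sup>2 = (\<Sum>r\<in>UNIV. \<Sum>c\<in>UNIV. (u c $ r)\<^sup>2 / (dd c)\<^sup>2)"
    unfolding frob_sq X_def by (simp add: power_divide)
  also have "\<dots> = (\<Sum>c\<in>UNIV. (\<Sum>r\<in>UNIV. (u c $ r)\<^sup>2) / (dd c)\<^sup>2)"
    by (subst sum.swap) (simp add: sum_divide_distrib)
  also have "\<dots> = (\<Sum>c\<in>UNIV. 1 / (dd c)\<^sup>2)"
    using u(1) norm_sq_vec by (metis power_one)
  also have "\<dots> \<le> (\<Sum>c\<in>(UNIV::'m set). 1 / \<delta>\<^sup>2)"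
  proof (rule sum_mono)
    fix c
    have "\<delta>\<^sup>2 \<le> (dd c)\<^sup>2" using ddpos[of c] d
      by (metis abs_le_square_iff abs_of_pos)
    then show "1 / (dd c)\<^sup>2 \<le> 1 / \<delta>\<^sup>2" using d by (simp add: frac_le)
  qed
  also have "\<dots> = real CARD('m) / \<delta>\<^sup>2" by simp
  finally show ?thesis using pinv_le_right_inverse[OF AX] by linarith
qed

lemma frob_bound:
  fixes A Abar :: "real^'n^'m"
  shows "(frob_norm A)\<^sup>2 \<le> 2 * real CARD('n) * (spec_norm Abar)\<^sup>2
     + 2 * (\<Sum>i\<in>UNIV. \<Sum>j\<in>UNIV. (A $ i $ j - Abar $ i $ j)\<^sup>2)"
proof -
  have pt: "(A $ i $ j)\<^sup>2 \<le> 2 * (Abar $ i $ j)\<^sup>2 + 2 * (A $ i $ j - Abar $ i $ j)\<^sup>2" for i j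
    by (smt (verit) zero_le_power2 power2_diff power2_sum)
  have "(frob_norm A)\<^sup>2 \<le> (\<Sum>i\<in>UNIV. \<Sum>j\<in>UNIV. 2 * (Abar $ i $ j)\<^sup>2 + 2 * (A $ i $ j - Abar $ i $ j)\<^sup>2)"
    unfolding frob_sq by (intro sum_mono pt)
  also have "\<dots> = 2 * (\<Sum>i\<in>UNIV. \<Sum>j\<in>UNIV. (Abar $ i $ j)\<^sup>2) + 2 * (\<Sum>i\<in>UNIV. \<Sum>j\<in>UNIV. (A $ i $ j - Abar $ i $ j)\<^sup>2)"
    by (simp add: sum.distrib sum_distrib_left)
  also have "(\<Sum>i\<in>UNIV. \<Sum>j\<in>UNIV. (Abar $ i $ j)\<^sup>2) = (\<Sum>j\<in>UNIV. (norm (column j Abar))\<^sup>2)"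
    by (subst sum.swap) (simp add: norm_sq_vec column_def)
  also have "\<dots> \<le> (\<Sum>j\<in>(UNIV::'n set). (spec_norm Abar)\<^sup>2)"
  proof (rule sum_mono)
    fix j
    have "norm (column j Abar) \<le> spec_norm Abar"
      unfolding spec_norm_def using norm_column_le_onorm[of j Abar] by simp
    then show "(norm (column j Abar))\<^sup>2 \<le> (spec_norm Abar)\<^sup>2"
      by (simp add: power_mono)
  qed
  also have "\<dots> = real CARD('n) * (spec_norm Abar)\<^sup>2" by simp
  finally show ?thesis by linarith
qed



lemma normal_density_le: "0 < \<sigma> \<Longrightarrow> normal_density \<mu> \<sigma> x \<le> 1 / (\<sigma> * sqrt (2 * pi))"
proof -
  assume s: "0 < \<sigma>"
  have "exp (-(x - \<mu>)\<^sup>2/ (2 * \<sigma>\<^sup>2)) \<le> 1" by simp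
  moreover have "sqrt (2 * pi * \<sigma>\<^sup>2) = \<sigma> * sqrt (2 * pi)" using s
    by (simp add: real_sqrt_mult mult.commute)
  ultimately show ?thesis unfolding normal_density_def using s
    by (simp add: divide_right_mono)
qed

lemma slab_bound:
  fixes K :: "'a set" and w \<mu> :: "'a \<Rightarrow> real"
  assumes K: "finite K" and w: "(\<Sum>k\<in>K. (w k)\<^sup>2) = 1" and s: "0 < \<sigma>" and dpos: "0 < \<delta>"
  shows "emeasure (PiM K (\<lambda>k. density lborel (normal_density (\<mu> k) \<sigma>)))
           {y\<in>space (PiM K (\<lambda>k. density lborel (normal_density (\<mu> k) \<sigma>))). \<bar>\<Sum>k\<in>K. w k * y k\<bar> < \<delta>}
         \<le> ennreal (2 * \<delta> / (\<sigma> * sqrt (2 * pi)))"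
proof -
  define N where "N k = density lborel (normal_density (\<mu> k) \<sigma>)" for k
  define M where "M = PiM K N"
  have pN: "prob_space (N k)" for k unfolding N_def using prob_space_normal_density s by blast
  interpret P: prob_space M unfolding M_def by (rule prob_space_PiM) (use pN in auto)
  define K' where "K' = {k\<in>K. w k \<noteq> 0}"
  have K'ne: "K' \<noteq> {}"
  proof
    assume "K' = {}"
    then have "\<forall>k\<in>K. w k = 0" unfolding K'_def by auto
    then show False using w by simp
  qed
  have K'K: "K' \<subseteq> K" unfolding K'_def by auto
  have fK': "finite K'" using K K'K finite_subset by blast
  have sumK': "(\<Sum>k\<in>K'. f k) = (\<Sum>k\<in>K. f k)" if "\<And>k. w k = 0 \<Longrightarrow> f k = 0" for f :: "'a \<Rightarrow> real"
    unfolding K'_def using K that by (intro sum.mono_neutral_left) auto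
  have distX: "distributed M lborel (\<lambda>y. y k) (normal_density (\<mu> k) \<sigma>)" if "k \<in> K" for k
  proof -
    have "distr M lborel (\<lambda>y. y k) = distr M (N k) (\<lambda>y. y k)"
      by (rule distr_cong) (auto simp: N_def)
    also have "\<dots> = N k" unfolding M_def by (rule distr_PiM_component) (use pN that in auto)
    finally show ?thesis unfolding distributed_def N_def M_def using that
      by (auto simp: N_def)
  qed
  have Kne: "K \<noteq> {}" using K'ne K'K by auto
  have sM: "sets M = sets (PiM K (\<lambda>_. borel))" unfolding M_def
    by (rule sets_PiM_cong) (auto simp: N_def)
  have indX: "P.indep_vars (\<lambda>_. borel) (\<lambda>k y. y k) K"
  proof (subst P.indep_vars_iff_distr_eq_PiM'[OF Kne])
    show "(\<lambda>y. y k) \<in> measurable M borel" if "k \<in> K" for k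
    proof -
      have "(\<lambda>y. y k) \<in> measurable (PiM K (\<lambda>_. borel)) borel" using that by simp
      then show ?thesis by (subst measurable_cong_sets[OF sM refl])
    qed
    have "distr M (PiM K (\<lambda>_. borel)) (\<lambda>x. \<lambda>k\<in>K. x k) = distr M (PiM K (\<lambda>_. borel)) (\<lambda>x. x)"
      by (rule distr_cong) (auto simp: M_def space_PiM PiE_def extensional_restrict)
    also have "\<dots> = M" by (rule distr_id2) (simp add: sM)
    also have "\<dots> = PiM K (\<lambda>k. distr M borel (\<lambda>y. y k))" unfolding M_def
    proof (rule PiM_cong)
      fix k assume k: "k \<in> K"
      have "distr (PiM K N) borel (\<lambda>y. y k) = distr (PiM K N) (N k) (\<lambda>y. y k)"
        by (rule distr_cong) (auto simp: N_def)
      also have "\<dots> = N k" by (rule distr_PiM_component) (use pN k in auto)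
      finally show "N k = distr (PiM K N) borel (\<lambda>y. y k)" by simp
    qed simp
    finally show "distr M (PiM K (\<lambda>_. borel)) (\<lambda>x. \<lambda>k\<in>K. x k) = PiM K (\<lambda>k. distr M borel (\<lambda>y. y k))" .
  qed
  have indY: "P.indep_vars (\<lambda>_. borel) (\<lambda>k y. w k * y k) K'"
    using P.indep_vars_subset[OF P.indep_vars_compose2[OF indX, of "\<lambda>k x. w k * x" "\<lambda>_. borel"] K'K]
    by simp
  have distY: "distributed M lborel (\<lambda>y. w k * y k) (normal_density (w k * \<mu> k) (\<bar>w k\<bar> * \<sigma>))"
    if "k \<in> K'" for k
    using P.normal_density_affine[OF distX[of k] s, of "w k" 0] that unfolding K'_def by simp
  have distZ: "distributed M lborel (\<lambda>x. \<Sum>k\<in>K'. w k * x k)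
      (normal_density (\<Sum>k\<in>K'. w k * \<mu> k) (sqrt (\<Sum>k\<in>K'. (\<bar>w k\<bar> * \<sigma>)\<^sup>2)))"
    by (rule P.sum_indep_normal[OF fK' K'ne indY]) (use distY s in \<open>auto simp: K'_def\<close>)
  have "(\<Sum>k\<in>K'. (\<bar>w k\<bar> * \<sigma>)\<^sup>2) = (\<Sum>k\<in>K. (\<bar>w k\<bar> * \<sigma>)\<^sup>2)"
    by (rule sumK') simp
  also have "\<dots> = \<sigma>\<^sup>2 * (\<Sum>k\<in>K. (w k)\<^sup>2)"
    by (simp add: sum_distrib_left power_mult_distrib mult.commute)
  finally have "sqrt (\<Sum>k\<in>K'. (\<bar>w k\<bar> * \<sigma>)\<^sup>2) = \<sigma>" using w s by simp
  then have distZ': "distributed M lborel (\<lambda>x. \<Sum>k\<in>K'. w k * x k)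
      (normal_density (\<Sum>k\<in>K'. w k * \<mu> k) \<sigma>)" using distZ by simp
  define c where "c = 1 / (\<sigma> * sqrt (2 * pi))"
  have seteq: "{y\<in>space M. \<bar>\<Sum>k\<in>K. w k * y k\<bar> < \<delta>} = (\<lambda>x. \<Sum>k\<in>K'. w k * x k) -` {-\<delta><..<\<delta>} \<inter> space M"
    using sumK'[of "\<lambda>k. w k * _ k"] by (auto simp: abs_less_iff)
  have "emeasure M {y\<in>space M. \<bar>\<Sum>k\<in>K. w k * y k\<bar> < \<delta>}
      = (\<integral>\<^sup>+x. ennreal (normal_density (\<Sum>k\<in>K'. w k * \<mu> k) \<sigma> x) * indicator {-\<delta><..<\<delta>} x \<partial>lborel)"
    unfolding seteq by (rule distributed_emeasure[OF distZ']) simp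
  also have "\<dots> \<le> (\<integral>\<^sup>+x. ennreal c * indicator {-\<delta><..<\<delta>} x \<partial>lborel)"
    by (intro nn_integral_mono)
       (auto split: split_indicator intro!: ennreal_leI simp: c_def normal_density_le[OF s])
  also have "\<dots> = ennreal c * ennreal (2 * \<delta>)"
    using dpos by (simp add: nn_integral_cmult_indicator)
  also have "\<dots> = ennreal (2 * \<delta> / (\<sigma> * sqrt (2 * pi)))"
    using dpos s by (simp add: c_def ennreal_mult'[symmetric])
  finally show ?thesis unfolding M_def N_def .
qed

lemma normal_second_moment:
  assumes s: "0 < \<sigma>"
  shows "(\<integral>\<^sup>+x. ennreal ((x - \<mu>)\<^sup>2) \<partial>density lborel (normal_density \<mu> \<sigma>)) = ennreal (\<sigma>\<^sup>2)"
proof -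
  have "(\<integral>\<^sup>+x. ennreal ((x - \<mu>)\<^sup>2) \<partial>density lborel (normal_density \<mu> \<sigma>))
      = (\<integral>\<^sup>+x. ennreal (normal_density \<mu> \<sigma> x * (x - \<mu>)^(2*1)) \<partial>lborel)"
    by (subst nn_integral_density) (auto simp: ennreal_mult'[symmetric] intro!: nn_integral_cong)
  also have "\<dots> = ennreal (integral\<^sup>L lborel (\<lambda>x. normal_density \<mu> \<sigma> x * (x - \<mu>)^(2*1)))"
    by (rule nn_integral_eq_integral) (use integrable_normal_moment[OF s, of \<mu> 2] in auto)
  also have "integral\<^sup>L lborel (\<lambda>x. normal_density \<mu> \<sigma> x * (x - \<mu>)^(2*1)) = \<sigma>\<^sup>2"
    using integral_normal_moment_even[OF s, of \<mu> 1] s by (simp add: power2_eq_square)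
  finally show ?thesis .
qed

lemma dev_bound:
  fixes \<mu> :: "'a::finite \<Rightarrow> real"
  assumes s: "0 < \<sigma>" and t: "0 < t"
  shows "emeasure (PiM UNIV (\<lambda>p. density lborel (normal_density (\<mu> p) \<sigma>)))
           {f\<in>space (PiM UNIV (\<lambda>p. density lborel (normal_density (\<mu> p) \<sigma>))). t < (\<Sum>p\<in>UNIV. (f p - \<mu> p)\<^sup>2)}
         \<le> ennreal (real CARD('a) * \<sigma>\<^sup>2 / t)"
proof -
  define N where "N p = density lborel (normal_density (\<mu> p) \<sigma>)" for p
  define M where "M = PiM UNIV N"
  have pN: "prob_space (N k)" for k unfolding N_def using prob_space_normal_density s by blast
  interpret P: prob_space M unfolding M_def by (rule prob_space_PiM) (use pN in auto)
  have sM: "sets M = sets (PiM UNIV (\<lambda>_. borel))" unfolding M_def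
    by (rule sets_PiM_cong) (auto simp: N_def)
  have meas: "(\<lambda>f. f p) \<in> borel_measurable M" for p
  proof -
    have "(\<lambda>y. y p) \<in> measurable (PiM UNIV (\<lambda>_. borel)) borel" by simp
    then show ?thesis by (subst measurable_cong_sets[OF sM refl])
  qed
  define u where "u f = ennreal (\<Sum>p\<in>UNIV. (f p - \<mu> p)\<^sup>2)" for f :: "'a \<Rightarrow> real"
  have umeas: "(\<lambda>x. u x * indicator (space M) x) \<in> borel_measurable M"
    unfolding u_def using meas by measurable
  have "emeasure M {f\<in>space M. t < (\<Sum>p\<in>UNIV. (f p - \<mu> p)\<^sup>2)}
      \<le> emeasure M {x\<in>space M. 1 \<le> ennreal (1/t) * u x}"
  proof (rule emeasure_mono)
    show "{f\<in>space M. t < (\<Sum>p\<in>UNIV. (f p - \<mu> p)\<^sup>2)} \<subseteq> {x\<in>space M. 1 \<le> ennreal (1/t) * u x}"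
    proof safe
      fix x assume "x \<in> space M" "t < (\<Sum>p\<in>UNIV. (x p - \<mu> p)\<^sup>2)"
      then have "1 \<le> (1/t) * (\<Sum>p\<in>UNIV. (x p - \<mu> p)\<^sup>2)" using t by (simp add: field_simps)
      then show "1 \<le> ennreal (1/t) * u x" unfolding u_def using t
        by (simp add: ennreal_mult'[symmetric] sum_nonneg ennreal_1[symmetric] del: ennreal_1)
    qed
    show "{x\<in>space M. 1 \<le> ennreal (1/t) * u x} \<in> sets M"
      unfolding u_def using meas by measurable
  qed
  also have "\<dots> \<le> ennreal (1/t) * (\<integral>\<^sup>+x. u x * indicator (space M) x \<partial>M)"
    by (rule nn_integral_Markov_inequality[OF umeas]) simp
  also have "(\<integral>\<^sup>+x. u x * indicator (space M) x \<partial>M) = (\<integral>\<^sup>+x. (\<Sum>p\<in>UNIV. ennreal ((x p - \<mu> p)\<^sup>2)) \<partial>M)"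
    by (intro nn_integral_cong) (simp add: u_def)
  also have "\<dots> = (\<Sum>p\<in>UNIV. \<integral>\<^sup>+x. ennreal ((x p - \<mu> p)\<^sup>2) \<partial>M)"
    by (rule nn_integral_sum) (use meas in measurable)
  also have "\<dots> = (\<Sum>p\<in>(UNIV::'a set). ennreal (\<sigma>\<^sup>2))"
  proof (rule sum.cong[OF refl])
    fix p :: 'a
    have "distr M (N p) (\<lambda>y. y p) = N p" unfolding M_def
      by (rule distr_PiM_component) (use pN in auto)
    moreover have T: "(\<lambda>y. y p) \<in> measurable M (N p)" unfolding M_def
      by (rule measurable_component_singleton) simp
    moreover have g: "(\<lambda>x. ennreal ((x - \<mu> p)\<^sup>2)) \<in> borel_measurable (N p)"
      unfolding N_def by simp
    ultimately have "(\<integral>\<^sup>+x. ennreal ((x p - \<mu> p)\<^sup>2) \<partial>M) = (\<integral>\<^sup>+x. ennreal ((x - \<mu> p)\<^sup>2) \<partial>N p)"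
      using nn_integral_distr[OF T, of "\<lambda>x. ennreal ((x - \<mu> p)\<^sup>2)"] by simp
    also have "\<dots> = ennreal (\<sigma>\<^sup>2)" unfolding N_def by (rule normal_second_moment[OF s])
    finally show "(\<integral>\<^sup>+x. ennreal ((x p - \<mu> p)\<^sup>2) \<partial>M) = ennreal (\<sigma>\<^sup>2)" .
  qed
  also have "\<dots> = ennreal (real CARD('a) * \<sigma>\<^sup>2)" by (simp add: ennreal_mult' ennreal_of_nat_eq_real_of_nat)
  finally show ?thesis unfolding M_def N_def using t
    by (simp add: ennreal_mult'[symmetric] mult.commute)
qed

lemma toM_meas_borel:
  "(\<lambda>f::('m::finite \<times> 'n::finite) \<Rightarrow> real. \<chi> i j. f (i,j)) \<in> borel_measurable (PiM UNIV (\<lambda>_. borel))"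
proof -
  have "continuous_on UNIV (\<lambda>f::('m::finite \<times> 'n::finite) \<Rightarrow> real. \<chi> i j. f (i,j))"
    by (intro continuous_intros continuous_on_product_coordinates)
  then have "(\<lambda>f::('m::finite \<times> 'n::finite) \<Rightarrow> real. \<chi> i j. f (i,j)) \<in> borel_measurable borel"
    by (rule borel_measurable_continuous_onI)
  then show ?thesis by (subst measurable_cong_sets[OF sets_PiM_equal_borel refl])
qed

lemma toM_meas:
  fixes \<mu> :: "'m::finite \<times> 'n::finite \<Rightarrow> real"
  shows "(\<lambda>f::('m::finite \<times> 'n::finite) \<Rightarrow> real. \<chi> i j. f (i,j)) \<in> borel_measurable (PiM UNIV (\<lambda>p. density lborel (normal_density (\<mu> p) \<sigma>)))"
proof -
  have "sets (PiM UNIV (\<lambda>p. density lborel (normal_density (\<mu> p) \<sigma>))) = sets (PiM UNIV (\<lambda>_. borel))"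
    by (rule sets_PiM_cong) auto
  then show ?thesis using toM_meas_borel by (subst measurable_cong_sets) auto
qed

lemma row_bad:
  fixes Abar :: "real^'n^'m" and i :: 'm
  assumes mn: "CARD('m) \<le> CARD('n)" and s: "0 < \<sigma>" and d: "0 < \<delta>"
  shows "emeasure (PiM UNIV (\<lambda>p. density lborel (normal_density (Abar $ fst p $ snd p) \<sigma>)))
     {f\<in>space (PiM UNIV (\<lambda>p. density lborel (normal_density (Abar $ fst p $ snd p) \<sigma>))).
        \<not> good \<delta> i (\<chi> i j. f (i,j))} \<le> ennreal (2 * \<delta> / (\<sigma> * sqrt (2 * pi)))"
proof -
  define N where "N p = density lborel (normal_density (Abar $ fst p $ snd p) \<sigma>)" for p :: "'m \<times> 'n"
  define M where "M = PiM UNIV N"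
  define q where "q = 2 * \<delta> / (\<sigma> * sqrt (2 * pi))"
  have pN: "prob_space (N k)" for k unfolding N_def using prob_space_normal_density s by blast
  interpret PS: product_sigma_finite N
    by (simp add: product_sigma_finite_def prob_space_imp_sigma_finite pN)
  define J where "J = {p::'m \<times> 'n. fst p \<noteq> i}"
  define I where "I = {p::'m \<times> 'n. fst p = i}"
  have JI: "J \<union> I = UNIV" "J \<inter> I = {}" unfolding J_def I_def by auto
  define B where "B = {f\<in>space M. \<not> good \<delta> i (\<chi> i j. f (i,j))}"
  have Bs: "B \<in> sets M"
  proof -
    have "open {A::real^'n^'m. \<not> good \<delta> i A}" by (rule open_Collect_neg[OF closed_good])
    then have o: "{A::real^'n^'m. \<not> good \<delta> i A} \<in> sets borel" by simp
    have "B = (\<lambda>f. \<chi> i j. f (i,j)) -` {A::real^'n^'m. \<not> good \<delta> i A} \<inter> space M"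
      unfolding B_def by auto
    also have "\<dots> \<in> sets M" unfolding M_def N_def
      by (rule measurable_sets[OF toM_meas o])
    finally show ?thesis .
  qed
  interpret PJ: prob_space "PiM J N" by (rule prob_space_PiM) (use pN in auto)
  have inner: "emeasure (PiM I N) ((\<lambda>y. merge J I (x, y)) -` B \<inter> space (PiM I N)) \<le> ennreal q"
    if x: "x \<in> space (PiM J N)" for x
  proof -
    define r where "r k = (\<chi> j. x (k, j))" for k
    define S where "S = r ` (UNIV - {i})"
    have "card S \<le> card (UNIV - {i} :: 'm set)" unfolding S_def by (rule card_image_le) simp
    also have "\<dots> = CARD('m) - 1" by (simp add: card_Diff_singleton)
    finally have "dim S \<le> CARD('m) - 1"
      using dim_le_card[of S S] span_superset[of S] unfolding S_def by fastforce
    moreover have "0 < CARD('m)" by simp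
    ultimately have "dim S < CARD('n)" using mn by linarith
    then have dimS: "dim S < DIM(real^'n)" by simp
    then obtain v where v: "v \<noteq> 0" "\<And>y. y \<in> span S \<Longrightarrow> orthogonal v y"
      using orthogonal_to_subspace_exists[OF dimS] by blast
    define u where "u = v /\<^sub>R norm v"
    have nu: "norm u = 1" using v unfolding u_def by simp
    have ru: "r k \<bullet> u = 0" if "k \<noteq> i" for k
    proof -
      have "r k \<in> span S" unfolding S_def using that by (intro span_base) auto
      then have "v \<bullet> r k = 0" using v(2) unfolding orthogonal_def by blast
      then show ?thesis unfolding u_def by (simp add: inner_commute)
    qed
    define w where "w p = u $ snd p" for p :: "'m \<times> 'n"
    have Ieq: "I = (\<lambda>j. (i, j)) ` UNIV" unfolding I_def by auto
    have inj: "inj (\<lambda>j::'n. (i, j))" by (auto simp: inj_def)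
    have sumI: "(\<Sum>p\<in>I. g p) = (\<Sum>j\<in>UNIV. g (i, j))" for g :: "'m \<times> 'n \<Rightarrow> real"
      unfolding Ieq by (simp add: sum.reindex[OF inj])
    have w1: "(\<Sum>p\<in>I. (w p)\<^sup>2) = 1"
      unfolding sumI w_def using nu norm_sq_vec[of u] by simp
    have sub: "(\<lambda>y. merge J I (x, y)) -` B \<inter> space (PiM I N)
        \<subseteq> {y\<in>space (PiM I N). \<bar>\<Sum>p\<in>I. w p * y p\<bar> < \<delta>}"
    proof safe
      fix y assume y: "y \<in> space (PiM I N)" and yB: "merge J I (x, y) \<in> B"
      define A :: "real^'n^'m" where "A = (\<chi> i j. merge J I (x, y) (i,j))"
      have Ak: "A $ k = r k" if "k \<noteq> i" for k
        using that JI unfolding A_def r_def J_def by (simp add: vec_eq_iff)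
      have Ai: "A $ i = (\<chi> j. y (i, j))"
        using JI unfolding A_def I_def by (simp add: vec_eq_iff)
      have "\<not> good \<delta> i A" using yB unfolding B_def A_def by simp
      then have "\<not> \<delta> \<le> \<bar>A $ i \<bullet> u\<bar>" unfolding good_def using nu ru Ak by metis
      moreover have "A $ i \<bullet> u = (\<Sum>p\<in>I. w p * y p)"
        unfolding Ai sumI w_def by (simp add: inner_vec_def mult.commute)
      ultimately show "\<bar>\<Sum>p\<in>I. w p * y p\<bar> < \<delta>" by simp
    qed
    have slab_meas: "{y\<in>space (PiM I N). \<bar>\<Sum>p\<in>I. w p * y p\<bar> < \<delta>} \<in> sets (PiM I N)"
    proof -
      have comp: "(\<lambda>y. y p) \<in> borel_measurable (PiM I N)" if "p \<in> I" for p
      proof -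
        have "(\<lambda>y. y p) \<in> measurable (PiM I N) (N p)" by (rule measurable_component_singleton[OF that])
        moreover have "measurable (PiM I N) (N p) = measurable (PiM I N) borel"
          by (rule measurable_cong_sets) (simp_all add: N_def)
        ultimately show ?thesis by simp
      qed
      have hm[measurable]: "(\<lambda>y. \<Sum>p\<in>I. w p * y p) \<in> borel_measurable (PiM I N)"
        by (rule borel_measurable_sum) (use comp in auto)
      have "{y\<in>space (PiM I N). \<bar>\<Sum>p\<in>I. w p * y p\<bar> < \<delta>}
          = (\<lambda>y. \<Sum>p\<in>I. w p * y p) -` {-\<delta><..<\<delta>} \<inter> space (PiM I N)"
        by (auto simp: abs_less_iff)
      also have "\<dots> \<in> sets (PiM I N)" by (rule measurable_sets[OF hm]) simp
      finally show ?thesis .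
    qed
    have "emeasure (PiM I N) ((\<lambda>y. merge J I (x, y)) -` B \<inter> space (PiM I N))
        \<le> emeasure (PiM I N) {y\<in>space (PiM I N). \<bar>\<Sum>p\<in>I. w p * y p\<bar> < \<delta>}"
      by (rule emeasure_mono[OF sub slab_meas])
    also have "\<dots> \<le> ennreal q" unfolding q_def N_def
      by (rule slab_bound[OF _ w1 s d]) (simp add: I_def)
    finally show ?thesis .
  qed
  have "emeasure M B = emeasure (PiM (J \<union> I) N) B" unfolding M_def JI ..
  also have "\<dots> = (\<integral>\<^sup>+x. emeasure (PiM I N) ((\<lambda>y. merge J I (x, y)) -` B \<inter> space (PiM I N)) \<partial>PiM J N)"
    by (rule PS.emeasure_fold_integral) (use JI Bs M_def in auto)
  also have "\<dots> \<le> (\<integral>\<^sup>+x. ennreal q \<partial>PiM J N)"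
    by (rule nn_integral_mono) (use inner in auto)
  also have "\<dots> = ennreal q" by (simp add: PJ.emeasure_space_1)
  finally show ?thesis unfolding B_def M_def N_def q_def .
qed



lemma numeric_final:
  fixes n m :: real
  assumes n1: "1 \<le> n" and mn: "m \<le> n" and m0: "0 \<le> m"
  shows "1 / (49 * n) + m * (2 / (exp 1 * n * sqrt n * sqrt (2 * pi))) \<le> 1 / sqrt n"
proof -
  have sn: "1 \<le> sqrt n" using n1 by simp
  have "sqrt n * 1 \<le> sqrt n * sqrt n" using sn by (intro mult_left_mono) auto
  then have snn: "sqrt n \<le> n" using n1 by simp
  have e2: "2 \<le> exp (1::real)" using exp_ge_add_one_self[of 1] by simp
  have p2: "2 \<le> sqrt (2 * pi)" using pi_gt3 by (intro real_le_rsqrt) simp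
  have k: "4 \<le> exp 1 * sqrt (2 * pi)" using mult_mono[OF e2 p2] by simp
  have a: "2 / (exp 1 * sqrt (2 * pi)) \<le> 1 / 2" using k by (simp add: field_simps)
  have b: "m / n \<le> 1" using mn n1 by simp
  have "m * (2 / (exp 1 * n * sqrt n * sqrt (2 * pi))) = (m / n) * (2 / (exp 1 * sqrt (2 * pi))) * (1 / sqrt n)"
    by (simp add: field_simps)
  also have "\<dots> \<le> 1 * (1 / 2) * (1 / sqrt n)"
    using a b m0 n1 sn by (intro mult_mono) (auto simp: divide_nonneg_nonneg)
  finally have t1: "m * (2 / (exp 1 * n * sqrt n * sqrt (2 * pi))) \<le> (1/2) * (1 / sqrt n)" by simp
  have t2: "1 / (49 * n) \<le> (1/49) * (1 / sqrt n)" using snn sn by (simp add: frac_le)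
  have "0 \<le> 1 / sqrt n" using n1 by simp
  then show ?thesis using t1 t2 by linarith
qed

theorem theorem6p5:
  fixes Abar :: "real^'n^'m" and \<sigma> :: real
  assumes "CARD('m) \<le> CARD('n)" and "\<sigma> > 0"
  shows "measure (gaussian_matrix Abar \<sigma>)
           {A. kappa_F A \<le> 98 * \<sigma>\<^sup>2 * real CARD('n) ^ 3 + 2 * real CARD('n) * (spec_norm Abar)\<^sup>2
                          + exp 2 * real CARD('n) ^ 4 / \<sigma>\<^sup>2}
         \<ge> 1 - (1 / sqrt (real CARD('n)) + exp (- 2 * real CARD('n) / pi\<^sup>2))"
proof -
  note mn = assms(1) and s = assms(2)
  define nn where "nn = real CARD('n)"
  define mm where "mm = real CARD('m)"
  have nn1: "1 \<le> nn" unfolding nn_def by (simp add: Suc_leI)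
  have mm0: "0 \<le> mm" "mm \<le> nn" using mn unfolding mm_def nn_def by auto
  define \<mu> where "\<mu> p = Abar $ fst p $ snd p" for p :: "'m \<times> 'n"
  define N where "N p = density lborel (normal_density (\<mu> p) \<sigma>)" for p
  define M where "M = PiM UNIV N"
  define toM :: "('m \<times> 'n \<Rightarrow> real) \<Rightarrow> real^'n^'m" where "toM f = (\<chi> i j. f (i,j))" for f
  have pN: "prob_space (N k)" for k unfolding N_def using prob_space_normal_density s by blast
  interpret P: prob_space M unfolding M_def by (rule prob_space_PiM) (use pN in auto)
  have G: "gaussian_matrix Abar \<sigma> = distr M borel toM"
    unfolding gaussian_matrix_def M_def N_def toM_def \<mu>_def ..
  have tm: "toM \<in> borel_measurable M"
    unfolding M_def N_def toM_def by (rule toM_meas)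
  define c where "c = 98 * \<sigma>\<^sup>2 * nn ^ 3 + 2 * nn * (spec_norm Abar)\<^sup>2 + exp 2 * nn ^ 4 / \<sigma>\<^sup>2"
  define S where "S = {A::real^'n^'m. kappa_F A \<le> c}"
  have Sb: "S \<in> sets borel" unfolding S_def using closed_kappa_le[of c] by (rule borel_closed)
  define T where "T = toM -` S \<inter> space M"
  have Ts: "T \<in> sets M" unfolding T_def by (rule measurable_sets[OF tm Sb])
  have meas_eq: "measure (gaussian_matrix Abar \<sigma>) S = measure M T"
    unfolding G T_def by (rule measure_distr[OF tm Sb])
  define \<delta> where "\<delta> = \<sigma> / (exp 1 * nn * sqrt nn)"
  have dpos: "0 < \<delta>" unfolding \<delta>_def using s nn1 by simp
  define B0 where "B0 = {f\<in>space M. 49 * \<sigma>\<^sup>2 * nn ^ 3 < (\<Sum>p\<in>UNIV. (f p - \<mu> p)\<^sup>2)}"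
  define Bi where "Bi i = {f\<in>space M. \<not> good \<delta> i (toM f)}" for i
  have comp: "(\<lambda>f. f p) \<in> borel_measurable M" for p
  proof -
    have "(\<lambda>f. f p) \<in> measurable M (N p)" unfolding M_def by (rule measurable_component_singleton) simp
    moreover have "measurable M (N p) = measurable M borel"
      by (rule measurable_cong_sets) (simp_all add: N_def)
    ultimately show ?thesis by simp
  qed
  have hm: "(\<lambda>f. \<Sum>p\<in>UNIV. (f p - \<mu> p)\<^sup>2) \<in> borel_measurable M"
    by (rule borel_measurable_sum) (use comp in measurable)
  have B0s: "B0 \<in> sets M"
  proof -
    have "B0 = (\<lambda>f. \<Sum>p\<in>UNIV. (f p - \<mu> p)\<^sup>2) -` {49 * \<sigma>\<^sup>2 * nn ^ 3<..} \<inter> space M"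
      unfolding B0_def by auto
    also have "\<dots> \<in> sets M" by (rule measurable_sets[OF hm]) simp
    finally show ?thesis .
  qed
  have Bis: "Bi i \<in> sets M" for i
  proof -
    have "open {A::real^'n^'m. \<not> good \<delta> i A}" by (rule open_Collect_neg[OF closed_good])
    then have o: "{A::real^'n^'m. \<not> good \<delta> i A} \<in> sets borel" by simp
    have "Bi i = toM -` {A::real^'n^'m. \<not> good \<delta> i A} \<inter> space M"
      unfolding Bi_def by auto
    also have "\<dots> \<in> sets M" by (rule measurable_sets[OF tm o])
    finally show ?thesis .
  qed
  have cover: "space M - T \<subseteq> B0 \<union> (\<Union>i. Bi i)"
  proof
    fix f assume f: "f \<in> space M - T"
    show "f \<in> B0 \<union> (\<Union>i. Bi i)"
    proof (rule ccontr)
      assume "f \<notin> B0 \<union> (\<Union>i. Bi i)"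
      then have E: "(\<Sum>p\<in>UNIV. (f p - \<mu> p)\<^sup>2) \<le> 49 * \<sigma>\<^sup>2 * nn ^ 3" and g: "\<And>i. good \<delta> i (toM f)"
        using f unfolding B0_def Bi_def by auto
      define A where "A = toM f"
      have Esum: "(\<Sum>i\<in>UNIV. \<Sum>j\<in>UNIV. (A $ i $ j - Abar $ i $ j)\<^sup>2) = (\<Sum>p\<in>UNIV. (f p - \<mu> p)\<^sup>2)"
        unfolding A_def toM_def \<mu>_def
        by (simp add: sum.cartesian_product split_def)
      have fb: "(frob_norm A)\<^sup>2 \<le> 2 * nn * (spec_norm Abar)\<^sup>2 + 2 * (\<Sum>p\<in>UNIV. (f p - \<mu> p)\<^sup>2)"
        using frob_bound[of A Abar] unfolding Esum nn_def .
      have f1: "(frob_norm A)\<^sup>2 \<le> 2 * nn * (spec_norm Abar)\<^sup>2 + 98 * \<sigma>\<^sup>2 * nn ^ 3"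
        using fb E by linarith
      have f2: "(frob_norm (pinv A))\<^sup>2 \<le> mm / \<delta>\<^sup>2"
        unfolding mm_def by (rule right_inv_good[OF dpos]) (simp add: A_def g)
      have ee: "exp (2::real) = (exp 1)\<^sup>2" using exp_add[of "1::real" 1] by (simp add: power2_eq_square)
      have q: "(exp 1 * nn * sqrt nn)\<^sup>2 = exp 2 * nn ^ 3"
        using nn1 unfolding ee by (simp add: power_mult_distrib power3_eq_cube power2_eq_square)
      have d2: "\<delta>\<^sup>2 = \<sigma>\<^sup>2 / (exp 2 * nn ^ 3)" unfolding \<delta>_def power_divide q ..
      have "mm / \<delta>\<^sup>2 = mm * exp 2 * nn ^ 3 / \<sigma>\<^sup>2"
        unfolding d2 using s nn1 by simp
      also have "\<dots> \<le> nn * exp 2 * nn ^ 3 / \<sigma>\<^sup>2"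
        using mm0 s by (intro divide_right_mono mult_right_mono) auto
      also have "\<dots> = exp 2 * nn ^ 4 / \<sigma>\<^sup>2" by (simp add: power_numeral_reduce)
      finally have f3: "mm / \<delta>\<^sup>2 \<le> exp 2 * nn ^ 4 / \<sigma>\<^sup>2" .
      have "kappa_F A \<le> c" unfolding kappa_F_def c_def using f1 f2 f3 by linarith
      then have "f \<in> T" using f unfolding T_def S_def A_def by auto
      then show False using f by auto
    qed
  qed
  have Us: "(\<Union>i. Bi i) \<in> sets M" using Bis by auto
  have sub: "measure M (space M - T) \<le> measure M B0 + (\<Sum>i\<in>UNIV. measure M (Bi i))"
  proof -
    have "measure M (space M - T) \<le> measure M (B0 \<union> (\<Union>i. Bi i))"
      by (rule P.finite_measure_mono[OF cover]) (use B0s Us in auto)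
    also have "\<dots> \<le> measure M B0 + measure M (\<Union>i. Bi i)"
      by (rule measure_subadditive) (use B0s Us P.emeasure_finite in auto)
    also have "measure M (\<Union>i. Bi i) \<le> (\<Sum>i\<in>UNIV. measure M (Bi i))"
      by (rule P.finite_measure_subadditive_finite) (use Bis in auto)
    finally show ?thesis by simp
  qed
  have m0: "measure M B0 \<le> 1 / (49 * nn)"
  proof -
    define t where "t = 49 * \<sigma>\<^sup>2 * nn ^ 3"
    have tpos: "0 < t" unfolding t_def using s nn1 by simp
    have "emeasure M B0 \<le> ennreal (real CARD('m \<times> 'n) * \<sigma>\<^sup>2 / t)"
      unfolding M_def N_def B0_def t_def[symmetric] by (rule dev_bound[OF s tpos])
    moreover have "real CARD('m \<times> 'n) = mm * nn" unfolding mm_def nn_def by simp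
    ultimately have "measure M B0 \<le> mm * nn * \<sigma>\<^sup>2 / t"
      using tpos mm0 by (simp add: P.emeasure_eq_measure ennreal_le_iff)
    also have "\<dots> = mm / (49 * nn\<^sup>2)" unfolding t_def using s nn1
      by (simp add: power2_eq_square power3_eq_cube)
    also have "\<dots> \<le> nn / (49 * nn\<^sup>2)" using mm0 nn1 by (simp add: divide_right_mono)
    also have "\<dots> = 1 / (49 * nn)" using nn1 by (simp add: power2_eq_square)
    finally show ?thesis .
  qed
  define q where "q = 2 / (exp 1 * nn * sqrt nn * sqrt (2 * pi))"
  have mi: "measure M (Bi i) \<le> q" for i
  proof -
    have "emeasure M (Bi i) \<le> ennreal (2 * \<delta> / (\<sigma> * sqrt (2 * pi)))"
      unfolding M_def N_def Bi_def toM_def \<mu>_def by (rule row_bad[OF mn s dpos])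
    moreover have "2 * \<delta> / (\<sigma> * sqrt (2 * pi)) = q" unfolding q_def \<delta>_def using s by simp
    ultimately show ?thesis using nn1 by (simp add: P.emeasure_eq_measure ennreal_le_iff q_def)
  qed
  have "(\<Sum>i\<in>UNIV. measure M (Bi i)) \<le> (\<Sum>i\<in>(UNIV::'m set). q)" by (rule sum_mono) (rule mi)
  also have "\<dots> = mm * q" unfolding mm_def by simp
  finally have msum: "(\<Sum>i\<in>UNIV. measure M (Bi i)) \<le> mm * q" .
  have tot: "measure M (space M - T) \<le> 1 / sqrt nn"
    using sub m0 msum numeric_final[OF nn1 mm0(2) mm0(1)] unfolding q_def by linarith
  have "measure M T = 1 - measure M (space M - T)" using P.prob_compl[OF Ts] by simp
  then have "measure (gaussian_matrix Abar \<sigma>) S \<ge> 1 - 1 / sqrt nn" using meas_eq tot by simp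
  moreover have "S = {A. kappa_F A \<le> 98 * \<sigma>\<^sup>2 * real CARD('n) ^ 3 + 2 * real CARD('n) * (spec_norm Abar)\<^sup>2
                          + exp 2 * real CARD('n) ^ 4 / \<sigma>\<^sup>2}" unfolding S_def c_def nn_def ..
  ultimately have "measure (gaussian_matrix Abar \<sigma>)
           {A. kappa_F A \<le> 98 * \<sigma>\<^sup>2 * real CARD('n) ^ 3 + 2 * real CARD('n) * (spec_norm Abar)\<^sup>2
                          + exp 2 * real CARD('n) ^ 4 / \<sigma>\<^sup>2} \<ge> 1 - 1 / sqrt (real CARD('n))"
    unfolding nn_def by simp
  moreover have "0 \<le> exp (- 2 * real CARD('n) / pi\<^sup>2)" by simp
  ultimately show ?thesis by linarith
qed

end
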